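(* Let $\varepsilon>0$ and $C_0>0$. There exist constants $c_1,c_2>0$ such that for all sufficiently large $n$ and every integer $k$ with $1\le k\le C_0\,n^{1/2-\varepsilon}$, there exist $m$ and a sequence $S\in[n]^m$ with $\mathsf{WS}(S)\le c_1\, m\log k$ and $\mathsf{F}^{k}(S)\ge c_2\, m\log(n/k)$.
   Context: $\log(x)=\log_2(\max\{2,x\})$. Working set bound: $\mathsf{WS}(X)=\sum_{t=1}^m\log\rho_t(x_t)$, where $\rho_t(a)$ is the number of distinct keys accessed strictly between the last time $s<t$ with $x_s=a$ and time $t$ (all keys considered accessed at time $0$). $k$-finger cost: for a static BST $T$ on $[n]$, $d_T(a,b)$ is the number of edges between $a$ and $b$ in $T$. A $k$-finger strategy is an initial vector $\vec\ell\in[n]^k$ and $\vec f\in[k]^m$, finger $f_t$ serving $x_t$, with cost $\sum_{t=1}^m(1+d_T(x_t,p_t))$ where $p_t$ is the position of finger $f_t$ before time $t$ (its last served key, or $\ell_{f_t}$). $\mathsf{F}^k_T(X)$ is the minimum such cost and $\mathsf{F}^k(X)=\min_T\mathsf{F}^k_T(X)$ over BSTs $T$ on $[n]$. *)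

theory Defs
  imports Complex_Main "HOL-Library.Tree"
begin

definition lg :: "real \<Rightarrow> real" where
  "lg x = log 2 (max 2 x)"

(* Access sequence X = x_1 ... x_m is a list xs with x_t = xs ! (t-1).
   last_acc xs t a = the last time s < t with x_s = a, or 0 (all keys accessed at time 0). *)
definition last_acc :: "nat list \<Rightarrow> nat \<Rightarrow> nat \<Rightarrow> nat" where
  "last_acc xs t a = Max ({0} \<union> {s. 1 \<le> s \<and> s < t \<and> xs ! (s - 1) = a})"

definition rho :: "nat list \<Rightarrow> nat \<Rightarrow> nat \<Rightarrow> nat" where
  "rho xs t a = card {xs ! (u - 1) | u. last_acc xs t a < u \<and> u < t}"

definition WS :: "nat list \<Rightarrow> real" where
  "WS xs = (\<Sum>t = 1..length xs. lg (real (rho xs t (xs ! (t - 1)))))"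

fun depth_key :: "nat tree \<Rightarrow> nat \<Rightarrow> nat" where
  "depth_key Leaf a = 0"
| "depth_key (Node l x r) a =
     (if a = x then 0 else if a < x then 1 + depth_key l a else 1 + depth_key r a)"

(* d_T(a,b): number of edges on the path between keys a and b of the BST T
   (the path goes through their lowest common ancestor) *)
fun tdist :: "nat tree \<Rightarrow> nat \<Rightarrow> nat \<Rightarrow> nat" where
  "tdist Leaf a b = 0"
| "tdist (Node l x r) a b =
     (if a < x \<and> b < x then tdist l a b
      else if x < a \<and> x < b then tdist r a b
      else depth_key (Node l x r) a + depth_key (Node l x r) b)"

definition bst_on :: "nat \<Rightarrow> nat tree \<Rightarrow> bool" where
  "bst_on n T \<longleftrightarrow> bst T \<and> set_tree T = {1..n}"

fun finger_cost :: "nat tree \<Rightarrow> (nat \<Rightarrow> nat) \<Rightarrow> nat list \<Rightarrow> nat list \<Rightarrow> nat" where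
  "finger_cost T pos (x # xs) (f # fs) =
     1 + tdist T x (pos f) + finger_cost T (pos(f := x)) xs fs"
| "finger_cost T pos _ _ = 0"

(* F^k_T(X): minimum over initial vectors l in [n]^k (fingers indexed 0..k-1)
   and finger sequences f in [k]^m *)
definition FkT :: "nat \<Rightarrow> nat \<Rightarrow> nat tree \<Rightarrow> nat list \<Rightarrow> nat" where
  "FkT n k T xs = Inf {finger_cost T l xs fs | l fs.
      (\<forall>i < k. l i \<in> {1..n}) \<and> length fs = length xs \<and> set fs \<subseteq> {..<k}}"

definition Fk :: "nat \<Rightarrow> nat \<Rightarrow> nat list \<Rightarrow> nat" where
  "Fk n k xs = Inf {FkT n k T xs | T. bst_on n T}"

end

theory Submission
  imports Defs
begin


lemma tdist_self: "tdist T a a = 0"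
  by (induction T) auto

lemma depth_sum_le2:
  "bst T \<Longrightarrow> sum_list (map (\<lambda>a. (1/4::real)^depth_key T a) (inorder T)) \<le> 2"
proof (induction T)
  case Leaf
  then show ?case by simp
next
  case (Node l x r)
  have eql: "map (\<lambda>a. (1/4::real)^depth_key (Node l x r) a) (inorder l)
      = map (\<lambda>a. (1/4) * (1/4::real)^depth_key l a) (inorder l)"
    using Node.prems by (auto intro!: map_cong)
  have eqr: "map (\<lambda>a. (1/4::real)^depth_key (Node l x r) a) (inorder r)
      = map (\<lambda>a. (1/4) * (1/4::real)^depth_key r a) (inorder r)"
    using Node.prems by (auto intro!: map_cong)
  have "sum_list (map (\<lambda>a. (1/4::real)^depth_key (Node l x r) a) (inorder (Node l x r)))
     = 1 + (1/4) * sum_list (map (\<lambda>a. (1/4::real)^depth_key l a) (inorder l))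
         + (1/4) * sum_list (map (\<lambda>a. (1/4::real)^depth_key r a) (inorder r))"
    by (simp only: inorder.simps map_append sum_list_append list.map sum_list.Cons eql eqr sum_list_const_mult) simp
  then show ?case using Node by simp
qed

lemma kraft_aux:
  "bst T \<Longrightarrow> p \<in> set_tree T \<Longrightarrow>
   sum_list (map (\<lambda>a. (1/4::real)^tdist T a p) (inorder T)) \<le> 5/2 - (1/2) * (1/4)^depth_key T p"
proof (induction T)
  case Leaf
  then show ?case by simp
next
  case (Node l x r)
  let ?T = "Node l x r"
  consider "p = x" | "p < x" "p \<in> set_tree l" | "x < p" "p \<in> set_tree r"
    using Node.prems by auto
  then show ?case
  proof cases
    case 1
    have eql: "map (\<lambda>a. (1/4::real)^tdist ?T a p) (inorder l)
      = map (\<lambda>a. (1/4) * (1/4::real)^depth_key l a) (inorder l)"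
      using Node.prems 1 by (auto intro!: map_cong)
    have eqr: "map (\<lambda>a. (1/4::real)^tdist ?T a p) (inorder r)
      = map (\<lambda>a. (1/4) * (1/4::real)^depth_key r a) (inorder r)"
      using Node.prems 1 by (auto intro!: map_cong)
    have "sum_list (map (\<lambda>a. (1/4::real)^tdist ?T a p) (inorder ?T))
     = 1 + (1/4) * sum_list (map (\<lambda>a. (1/4::real)^depth_key l a) (inorder l))
         + (1/4) * sum_list (map (\<lambda>a. (1/4::real)^depth_key r a) (inorder r))"
      by (simp only: inorder.simps map_append sum_list_append list.map sum_list.Cons eql eqr sum_list_const_mult) (simp add: 1 tdist_self)
    then show ?thesis using depth_sum_le2[of l] depth_sum_le2[of r] Node.prems 1 by simp
  next
    case 2
    let ?q = "(1/4::real)^depth_key l p"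
    have eql: "map (\<lambda>a. (1/4::real)^tdist ?T a p) (inorder l)
      = map (\<lambda>a. (1/4::real)^tdist l a p) (inorder l)"
      using Node.prems 2 by (auto intro!: map_cong)
    have eqr: "map (\<lambda>a. (1/4::real)^tdist ?T a p) (inorder r)
      = map (\<lambda>a. ((1/4) * ?q) * ((1/4) * (1/4::real)^depth_key r a)) (inorder r)"
      using Node.prems 2 by (auto intro!: map_cong simp: power_add)
    have ex: "(1/4::real)^tdist ?T x p = (1/4) * ?q"
      using 2 by simp
    have "sum_list (map (\<lambda>a. (1/4::real)^tdist ?T a p) (inorder ?T))
     = sum_list (map (\<lambda>a. (1/4::real)^tdist l a p) (inorder l)) + (1/4) * ?q
         + ((1/4) * ?q) * ((1/4) * sum_list (map (\<lambda>a. (1/4::real)^depth_key r a) (inorder r)))"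
      by (simp only: inorder.simps map_append sum_list_append list.map sum_list.Cons eql eqr ex sum_list_const_mult) simp
    moreover have "sum_list (map (\<lambda>a. (1/4::real)^depth_key r a) (inorder r)) \<le> 2"
      using depth_sum_le2[of r] Node.prems by simp
    moreover have "sum_list (map (\<lambda>a. (1/4::real)^tdist l a p) (inorder l)) \<le> 5/2 - (1/2) * ?q"
      using Node 2 by simp
    moreover have "((1/4) * ?q) * ((1/4) * sum_list (map (\<lambda>a. (1/4::real)^depth_key r a) (inorder r))) \<le> ((1/4) * ?q) * (1/2)"
      by (rule mult_left_mono) (use calculation in auto)
    moreover have "(1/4::real)^depth_key ?T p = (1/4) * ?q" using 2 by simp
    ultimately show ?thesis by linarith
  next
    case 3
    let ?q = "(1/4::real)^depth_key r p"
    have eqr: "map (\<lambda>a. (1/4::real)^tdist ?T a p) (inorder r)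
      = map (\<lambda>a. (1/4::real)^tdist r a p) (inorder r)"
      using Node.prems 3 by (auto intro!: map_cong)
    have eql: "map (\<lambda>a. (1/4::real)^tdist ?T a p) (inorder l)
      = map (\<lambda>a. ((1/4) * ?q) * ((1/4) * (1/4::real)^depth_key l a)) (inorder l)"
      using Node.prems 3 by (auto intro!: map_cong simp: power_add)
    have ex: "(1/4::real)^tdist ?T x p = (1/4) * ?q"
      using 3 by simp
    have "sum_list (map (\<lambda>a. (1/4::real)^tdist ?T a p) (inorder ?T))
     = sum_list (map (\<lambda>a. (1/4::real)^tdist r a p) (inorder r)) + (1/4) * ?q
         + ((1/4) * ?q) * ((1/4) * sum_list (map (\<lambda>a. (1/4::real)^depth_key l a) (inorder l)))"
      by (simp only: inorder.simps map_append sum_list_append list.map sum_list.Cons eql eqr ex sum_list_const_mult) simp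
    moreover have "sum_list (map (\<lambda>a. (1/4::real)^depth_key l a) (inorder l)) \<le> 2"
      using depth_sum_le2[of l] Node.prems by simp
    moreover have "sum_list (map (\<lambda>a. (1/4::real)^tdist r a p) (inorder r)) \<le> 5/2 - (1/2) * ?q"
      using Node 3 by simp
    moreover have "((1/4) * ?q) * ((1/4) * sum_list (map (\<lambda>a. (1/4::real)^depth_key l a) (inorder l))) \<le> ((1/4) * ?q) * (1/2)"
      by (rule mult_left_mono) (use calculation in auto)
    moreover have "(1/4::real)^depth_key ?T p = (1/4) * ?q" using 3 by simp
    ultimately show ?thesis by linarith
  qed
qed



lemma bst_distinct_inorder: "bst T \<Longrightarrow> distinct (inorder T)"
  using bst_iff_sorted_wrt_less strict_sorted_iff by blast

lemma W_bound:
  assumes "bst_on n T"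
  shows "(\<Sum>a\<in>{1..n}. \<Sum>b\<in>{1..n}. (1/4::real)^tdist T a b) \<le> real n * (5/2)"
proof -
  have bst: "bst T" and st: "set_tree T = {1..n}" using assms by (auto simp: bst_on_def)
  have "(\<Sum>a\<in>{1..n}. \<Sum>b\<in>{1..n}. (1/4::real)^tdist T a b) = (\<Sum>b\<in>{1..n}. \<Sum>a\<in>{1..n}. (1/4::real)^tdist T a b)"
    by (rule sum.swap)
  also have "\<dots> \<le> (\<Sum>b\<in>{1..n}. 5/2)"
  proof (rule sum_mono)
    fix b assume b: "b \<in> {1..n}"
    have "(\<Sum>a\<in>{1..n}. (1/4::real)^tdist T a b) = sum_list (map (\<lambda>a. (1/4::real)^tdist T a b) (inorder T))"
      by (simp add: sum_list_distinct_conv_sum_set[OF bst_distinct_inorder[OF bst]] st)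
    also have "\<dots> \<le> 5/2 - (1/2) * (1/4)^depth_key T b"
      using kraft_aux[OF bst, of b] b st by simp
    also have "\<dots> \<le> 5/2" by simp
    finally show "(\<Sum>a\<in>{1..n}. (1/4::real)^tdist T a b) \<le> 5/2" .
  qed
  also have "\<dots> = real n * (5/2)" by simp
  finally show ?thesis .
qed

lemma preorder_inj:
  "bst t1 \<Longrightarrow> bst t2 \<Longrightarrow> preorder t1 = preorder (t2::nat tree) \<Longrightarrow> t1 = t2"
proof (induction t1 arbitrary: t2)
  case Leaf
  then show ?case by simp
next
  case (Node l a r)
  obtain l' a' r' where t2: "t2 = Node l' a' r'"
    using Node.prems(3) by (cases t2) auto
  have aa: "a' = a" using Node.prems(3) t2 by simp
  have app: "preorder l @ preorder r = preorder l' @ preorder r'"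
    using Node.prems(3) t2 by simp
  have f1: "filter (\<lambda>x. x < a) (preorder l @ preorder r) = preorder l"
    using Node.prems(1) by (auto simp: filter_id_conv filter_empty_conv)
  have f2: "filter (\<lambda>x. x < a) (preorder l' @ preorder r') = preorder l'"
    using Node.prems(2) t2 aa by (auto simp: filter_id_conv filter_empty_conv)
  have ll: "preorder l = preorder l'" using app f1 f2 by simp
  then have rr: "preorder r = preorder r'" using app by simp
  have "l = l'" using Node.IH(1)[of l'] Node.prems t2 ll by simp
  moreover have "r = r'" using Node.IH(2)[of r'] Node.prems t2 rr by simp
  ultimately show ?case using t2 aa by simp
qed

lemma trees_finite_card:
  "finite {T. bst_on n T} \<and> card {T. bst_on n T} \<le> n ^ n"
proof -
  let ?TS = "{T. bst_on n T}"
  let ?L = "{xs. set xs \<subseteq> {1..n} \<and> length xs = n}"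
  have inj: "inj_on preorder ?TS"
    by (rule inj_onI) (auto simp: bst_on_def intro: preorder_inj)
  have sub: "preorder ` ?TS \<subseteq> ?L"
  proof
    fix xs assume "xs \<in> preorder ` ?TS"
    then obtain T where T: "bst_on n T" "xs = preorder T" by auto
    have "distinct (inorder T)" using T bst_distinct_inorder by (auto simp: bst_on_def)
    then have "size T = card (set_tree T)"
      using distinct_card[of "inorder T"] by simp
    then show "xs \<in> ?L" using T by (auto simp: bst_on_def)
  qed
  have finL: "finite ?L" by (rule finite_lists_length_eq) simp
  have fin: "finite ?TS"
    using finite_imageD[OF finite_subset[OF sub finL] inj] .
  have "card ?TS \<le> card ?L"
    using card_inj_on_le[OF inj sub finL] .
  also have "\<dots> = n ^ n" using card_lists_length_eq[of "{1..n}" n] by simp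
  finally show ?thesis using fin by simp
qed

fun mkt :: "nat \<Rightarrow> nat tree" where
  "mkt 0 = Leaf"
| "mkt (Suc n) = Node (mkt n) (Suc n) Leaf"

lemma mkt_props: "bst (mkt n) \<and> set_tree (mkt n) = {1..n}"
  by (induction n) auto

lemma exists_bst: "\<exists>T. bst_on n T"
  using mkt_props by (auto simp: bst_on_def)

fun endpos :: "(nat \<Rightarrow> nat) \<Rightarrow> nat list \<Rightarrow> nat list \<Rightarrow> (nat \<Rightarrow> nat)" where
  "endpos pos (x # xs) (f # fs) = endpos (pos(f := x)) xs fs"
| "endpos pos _ _ = pos"

lemma finger_cost_append:
  "length fs = length xs \<Longrightarrow>
   finger_cost T pos (xs @ ys) (fs @ gs) = finger_cost T pos xs fs + finger_cost T (endpos pos xs fs) ys gs"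
proof (induction xs arbitrary: fs pos)
  case Nil
  then show ?case by simp
next
  case (Cons x xs)
  then obtain f fs' where "fs = f # fs'" by (cases fs) auto
  then show ?case using Cons by (simp add: fun_upd_def)
qed

lemma finger_cost_ge_length:
  "length fs = length xs \<Longrightarrow> length xs \<le> finger_cost T pos xs fs"
proof (induction xs arbitrary: fs pos)
  case Nil
  then show ?case by simp
next
  case (Cons x xs)
  then obtain f fs' where fs: "fs = f # fs'" by (cases fs) auto
  have "length xs \<le> finger_cost T (pos(f:=x)) xs fs'" using Cons fs by simp
  then show ?case using fs by simp
qed

lemma round_aux:
  "distinct ys \<Longrightarrow> set ys \<subseteq> G \<Longrightarrow> (\<forall>a\<in>G. \<forall>b\<in>G. a \<noteq> b \<longrightarrow> \<delta> \<le> tdist T a b) \<Longrightarrow>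
   length fs = length ys \<Longrightarrow> set fs \<subseteq> {..<k} \<Longrightarrow> U \<subseteq> {..<k} \<Longrightarrow>
   (\<forall>f\<in>U. pos f \<in> G \<and> pos f \<notin> set ys) \<Longrightarrow>
   int (length ys) + int \<delta> * (int (length ys) + int (card U) - int k) \<le> int (finger_cost T pos ys fs)"
proof (induction ys arbitrary: fs pos U)
  case Nil
  have "card U \<le> k" using Nil.prems(6) by (metis card_lessThan card_mono finite_lessThan)
  then show ?case by (simp add: mult_nonneg_nonpos)
next
  case (Cons x ys)
  obtain f fs' where fs: "fs = f # fs'" using Cons.prems(4) by (cases fs) auto
  have fk: "f < k" using Cons.prems(5) fs by auto
  have finU: "finite U" using Cons.prems(6) finite_subset by blast
  show ?case
  proof (cases "f \<in> U")
    case True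
    have "pos f \<in> G" "pos f \<noteq> x" using Cons.prems(7) True by auto
    moreover have "x \<in> G" using Cons.prems(2) by auto
    ultimately have dd: "\<delta> \<le> tdist T x (pos f)" using Cons.prems(3) by metis
    have IH: "int (length ys) + int \<delta> * (int (length ys) + int (card U) - int k) \<le> int (finger_cost T (pos(f := x)) ys fs')"
      apply (rule Cons.IH)
      using Cons.prems fs by auto
    show ?thesis using IH dd fs by (simp add: algebra_simps)
  next
    case False
    have IH: "int (length ys) + int \<delta> * (int (length ys) + int (card (insert f U)) - int k) \<le> int (finger_cost T (pos(f := x)) ys fs')"
      apply (rule Cons.IH)
      using Cons.prems fs fk by auto
    have "card (insert f U) = card U + 1" using False finU by simp
    then show ?thesis using IH fs by (simp add: algebra_simps)
  qed
qed



definition dlt :: "nat tree \<Rightarrow> nat list \<Rightarrow> nat" where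
  "dlt T g = (if distinct g \<and> 2 \<le> length g
     then Min {tdist T a b | a b. a \<in> set g \<and> b \<in> set g \<and> a \<noteq> b} else 0)"

lemma dlt_set_finite: "finite {tdist T a b | a b. a \<in> set g \<and> b \<in> set g \<and> a \<noteq> b}"
proof -
  have "{tdist T a b | a b. a \<in> set g \<and> b \<in> set g \<and> a \<noteq> b} \<subseteq> (\<lambda>(a,b). tdist T a b) ` (set g \<times> set g)"
    by auto
  then show ?thesis by (rule finite_subset) simp
qed

lemma dlt_le: "distinct g \<Longrightarrow> a \<in> set g \<Longrightarrow> b \<in> set g \<Longrightarrow> a \<noteq> b \<Longrightarrow> dlt T g \<le> tdist T a b"
proof -
  assume d: "distinct g" and ab: "a \<in> set g" "b \<in> set g" "a \<noteq> b"
  have "card {a,b} \<le> card (set g)" using ab by (intro card_mono) auto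
  then have "2 \<le> length g" using ab d distinct_card by fastforce
  then show ?thesis using d ab dlt_set_finite[of T g] unfolding dlt_def
    by (auto intro!: Min_le)
qed

lemma round_cost:
  assumes "length \<rho> = 2*k" "length fs = 2*k" "set fs \<subseteq> {..<k}"
  shows "2*k + k * dlt T \<rho> \<le> finger_cost T pos \<rho> fs"
proof (cases "distinct \<rho> \<and> 2 \<le> length \<rho>")
  case True
  have "int (length \<rho>) + int (dlt T \<rho>) * (int (length \<rho>) + int (card ({}::nat set)) - int k) \<le> int (finger_cost T pos \<rho> fs)"
    apply (rule round_aux[where G = "set \<rho>"])
    using True assms dlt_le by auto
  then have "int (2*k + k * dlt T \<rho>) \<le> int (finger_cost T pos \<rho> fs)" using assms by (simp add: algebra_simps)
  then show ?thesis by (simp only: of_nat_le_iff)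
next
  case False
  then have "dlt T \<rho> = 0" unfolding dlt_def by auto
  then show ?thesis using finger_cost_ge_length[of fs \<rho> T pos] assms by simp
qed

lemma rounds_cost:
  "(\<forall>\<rho>\<in>set R. length \<rho> = 2*k) \<Longrightarrow> length fs = length (concat R) \<Longrightarrow> set fs \<subseteq> {..<k} \<Longrightarrow>
   (\<Sum>\<rho>\<leftarrow>R. 2*k + k * dlt T \<rho>) \<le> finger_cost T pos (concat R) fs"
proof (induction R arbitrary: pos fs)
  case Nil
  then show ?case by simp
next
  case (Cons \<rho> R)
  let ?f1 = "take (2*k) fs" and ?f2 = "drop (2*k) fs"
  have len: "length ?f1 = length \<rho>" using Cons.prems by simp
  have s1: "set ?f1 \<subseteq> {..<k}" "set ?f2 \<subseteq> {..<k}"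
    using Cons.prems(3) by (meson order_trans set_take_subset, meson order_trans set_drop_subset)
  have "finger_cost T pos (concat (\<rho> # R)) fs = finger_cost T pos (\<rho> @ concat R) (?f1 @ ?f2)"
    by simp
  also have "\<dots> = finger_cost T pos \<rho> ?f1 + finger_cost T (endpos pos \<rho> ?f1) (concat R) ?f2"
    by (rule finger_cost_append[OF len])
  finally have eq: "finger_cost T pos (concat (\<rho> # R)) fs = \<dots>" .
  have a: "2*k + k * dlt T \<rho> \<le> finger_cost T pos \<rho> ?f1"
    using round_cost[of \<rho> k ?f1] Cons.prems s1 by simp
  have b: "(\<Sum>\<rho>\<leftarrow>R. 2*k + k * dlt T \<rho>) \<le> finger_cost T (endpos pos \<rho> ?f1) (concat R) ?f2"
    using Cons.IH Cons.prems s1 by simp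
  show ?case using a b eq by simp
qed

lemma sum_div_group:
  fixes h :: "nat \<Rightarrow> 'a::comm_semiring_1"
  assumes "0 < r"
  shows "(\<Sum>j<P*r. h (j div r)) = of_nat r * (\<Sum>p<P. h p)"
proof -
  have "(\<Sum>j<P*r. h (j div r)) = (\<Sum>p<P. \<Sum>j\<in>{p*r..<p*r+r}. h (j div r))"
    by (rule sum.nat_group[symmetric])
  also have "\<dots> = (\<Sum>p<P. of_nat r * h p)"
  proof (rule sum.cong)
    fix p assume "p \<in> {..<P}"
    have "(\<Sum>j\<in>{p*r..<p*r+r}. h (j div r)) = (\<Sum>j\<in>{p*r..<p*r+r}. h p)"
    proof (rule sum.cong)
      fix j assume "j \<in> {p*r..<p*r+r}"
      then have "p * r \<le> j" "j < Suc p * r" by auto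
      then have "j div r = p" using assms
        by (simp add: div_nat_eqI mult.commute)
      then show "h (j div r) = h p" by simp
    qed simp
    then show "(\<Sum>j\<in>{p*r..<p*r+r}. h (j div r)) = of_nat r * h p" by simp
  qed simp
  finally show ?thesis by (simp add: sum_distrib_left)
qed

lemma sum_mod_group:
  fixes h :: "nat \<Rightarrow> 'a::comm_semiring_1"
  shows "(\<Sum>j<P*r. h (j mod r)) = of_nat P * (\<Sum>j<r. h j)"
proof -
  have "(\<Sum>j<P*r. h (j mod r)) = (\<Sum>p<P. \<Sum>j\<in>{p*r..<p*r+r}. h (j mod r))"
    by (rule sum.nat_group[symmetric])
  also have "\<dots> = (\<Sum>p<P. (\<Sum>j<r. h j))"
  proof (rule sum.cong)
    fix p assume "p \<in> {..<P}"
    have "(\<Sum>j\<in>{0+p*r..<r+p*r}. h (j mod r)) = (\<Sum>j\<in>{0..<r}. h ((j + p*r) mod r))"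
      by (rule sum.shift_bounds_nat_ivl)
    then have "(\<Sum>j\<in>{p*r..<p*r+r}. h (j mod r)) = (\<Sum>j<r. h ((j + p*r) mod r))"
      by (simp add: lessThan_atLeast0 add.commute)
    also have "\<dots> = (\<Sum>j<r. h j)" by (intro sum.cong) auto
    finally show "(\<Sum>j\<in>{p*r..<p*r+r}. h (j mod r)) = (\<Sum>j<r. h j)" .
  qed simp
  finally show ?thesis by simp
qed

lemma nth_concat_uniform:
  "(\<forall>x\<in>set R. length x = s) \<Longrightarrow> i < length R * s \<Longrightarrow> concat R ! i = R ! (i div s) ! (i mod s)"
proof (induction R arbitrary: i)
  case Nil
  then show ?case by simp
next
  case (Cons x R)
  have lx: "length x = s" using Cons.prems by simp
  show ?case
  proof (cases "i < s")
    case True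
    then show ?thesis using lx by (simp add: nth_append)
  next
    case False
    have "concat R ! (i - s) = R ! ((i - s) div s) ! ((i - s) mod s)"
      using Cons False by auto
    moreover have "i div s = Suc ((i - s) div s)" using False Cons.prems by (intro le_div_geq) auto
    moreover have "i mod s = (i - s) mod s" using False by (simp add: le_mod_geq)
    moreover have "concat (x # R) ! i = concat R ! (i - s)" using lx False by (simp add: nth_append)
    ultimately show ?thesis by (simp only: nth_Cons_Suc)
  qed
qed

definition rounds :: "nat list list \<Rightarrow> nat \<Rightarrow> nat list list" where
  "rounds G r = map (\<lambda>j. G ! (j div r)) [0..<length G * r]"

lemma rounds_sum:
  assumes "0 < r"
  shows "(\<Sum>\<rho>\<leftarrow>rounds G r. 2*k + k * dlt T \<rho>) = length G * r * (2*k) + k * r * sum_list (map (dlt T) G)"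
proof -
  have "(\<Sum>\<rho>\<leftarrow>rounds G r. 2*k + k * dlt T \<rho>) = (\<Sum>j<length G * r. 2*k + k * dlt T (G ! (j div r)))"
    unfolding rounds_def by (simp add: sum_list_sum_nth atLeast0LessThan)
  also have "\<dots> = (\<Sum>j<length G * r. 2*k) + k * (\<Sum>j<length G * r. dlt T (G ! (j div r)))"
    by (simp add: sum.distrib sum_distrib_left)
  also have "(\<Sum>j<length G * r. dlt T (G ! (j div r))) = r * (\<Sum>p<length G. dlt T (G ! p))"
    using sum_div_group[OF assms, of "\<lambda>p. dlt T (G ! p)" "length G"] by simp
  also have "(\<Sum>p<length G. dlt T (G ! p)) = sum_list (map (dlt T) G)"
    by (simp add: sum_list_sum_nth atLeast0LessThan)
  finally show ?thesis by (simp add: mult.assoc mult.left_commute)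
qed

lemma rounds_len: "(\<forall>g\<in>set G. length g = s) \<Longrightarrow> \<rho> \<in> set (rounds G r) \<Longrightarrow> length \<rho> = s"
proof -
  assume g: "\<forall>g\<in>set G. length g = s" and r: "\<rho> \<in> set (rounds G r)"
  then obtain j where j: "j < length G * r" "\<rho> = G ! (j div r)" unfolding rounds_def by auto
  then have "0 < r" by (cases r) auto
  then have "j div r < length G" using j by (simp add: div_less_iff_less_mult)
  then show ?thesis using g j by simp
qed



definition lists_of :: "'a set \<Rightarrow> nat \<Rightarrow> 'a list set" where
  "lists_of A n = {xs. set xs \<subseteq> A \<and> length xs = n}"

lemma lists_of_finite: "finite A \<Longrightarrow> finite (lists_of A n)"
  unfolding lists_of_def by (rule finite_lists_length_eq)

lemma lists_of_card: "finite A \<Longrightarrow> card (lists_of A n) = card A ^ n"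
  unfolding lists_of_def by (rule card_lists_length_eq)

lemma lists_of_0: "lists_of A 0 = {[]}"
  unfolding lists_of_def by auto

lemma sum_lists_Suc:
  assumes "finite A"
  shows "(\<Sum>xs\<in>lists_of A (Suc n). F xs) = (\<Sum>x\<in>A. \<Sum>xs\<in>lists_of A n. F (x # xs))"
proof -
  have "(\<Sum>xs\<in>lists_of A (Suc n). F xs) = (\<Sum>xs\<in>(\<lambda>(xs, n). n#xs) ` (lists_of A n \<times> A). F xs)"
    unfolding lists_of_def lists_length_Suc_eq by simp
  also have "\<dots> = (\<Sum>p\<in>lists_of A n \<times> A. F ((\<lambda>(xs, n). n#xs) p))"
    by (rule sum.reindex[OF inj_split_Cons, unfolded comp_def])
  also have "\<dots> = (\<Sum>xs\<in>lists_of A n. \<Sum>x\<in>A. F (x # xs))"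
    unfolding sum.cartesian_product by (simp add: case_prod_unfold)
  also have "\<dots> = (\<Sum>x\<in>A. \<Sum>xs\<in>lists_of A n. F (x # xs))"
    by (rule sum.swap)
  finally show ?thesis .
qed

lemma sum_lists_prod:
  fixes h :: "'a \<Rightarrow> real"
  assumes "finite A"
  shows "(\<Sum>xs\<in>lists_of A n. prod_list (map h xs)) = (sum h A) ^ n"
proof (induction n)
  case 0
  then show ?case by (simp add: lists_of_0)
next
  case (Suc n)
  have "(\<Sum>xs\<in>lists_of A (Suc n). prod_list (map h xs)) = (\<Sum>x\<in>A. \<Sum>xs\<in>lists_of A n. h x * prod_list (map h xs))"
    by (simp add: sum_lists_Suc[OF assms])
  also have "\<dots> = (\<Sum>x\<in>A. h x * (sum h A) ^ n)"
    by (simp add: sum_distrib_left[symmetric] Suc)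
  also have "\<dots> = (sum h A) ^ Suc n"
    by (simp add: sum_distrib_right[symmetric])
  finally show ?case .
qed

lemma sum_lists_sum:
  fixes h :: "'a \<Rightarrow> real"
  assumes "finite A"
  shows "real (card A) * (\<Sum>g\<in>lists_of A s. sum_list (map h g)) = real s * real (card A) ^ s * sum h A"
proof (induction s)
  case 0
  then show ?case by (simp add: lists_of_0)
next
  case (Suc s)
  let ?c = "real (card A)"
  have "(\<Sum>g\<in>lists_of A (Suc s). sum_list (map h g)) = (\<Sum>x\<in>A. \<Sum>g\<in>lists_of A s. h x + sum_list (map h g))"
    by (simp add: sum_lists_Suc[OF assms])
  also have "\<dots> = (\<Sum>x\<in>A. ?c ^ s * h x + (\<Sum>g\<in>lists_of A s. sum_list (map h g)))"
    by (simp add: sum.distrib lists_of_card[OF assms])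
  also have "\<dots> = ?c ^ s * sum h A + ?c * (\<Sum>g\<in>lists_of A s. sum_list (map h g))"
    by (simp add: sum.distrib sum_distrib_left)
  finally have e: "(\<Sum>g\<in>lists_of A (Suc s). sum_list (map h g)) = \<dots>" .
  show ?case unfolding e using Suc by (simp add: algebra_simps)
qed

fun Phi :: "(nat \<Rightarrow> nat \<Rightarrow> real) \<Rightarrow> nat list \<Rightarrow> real" where
  "Phi w [] = 0"
| "Phi w (x # g) = sum_list (map (\<lambda>y. w x y + w y x) g) + Phi w g"

lemma Phi_nonneg: "(\<forall>a b. 0 \<le> w a b) \<Longrightarrow> 0 \<le> Phi w g"
  by (induction g) (auto intro!: sum_list_nonneg add_nonneg_nonneg)

lemma sum_lists_Phi:
  assumes "finite A"
  shows "real (card A) ^ 2 * (\<Sum>g\<in>lists_of A s. Phi w g)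
       = real s * (real s - 1) * real (card A) ^ s * (\<Sum>a\<in>A. \<Sum>b\<in>A. w a b)"
proof (induction s)
  case 0
  then show ?case by (simp add: lists_of_0)
next
  case (Suc s)
  let ?c = "real (card A)"
  let ?W = "(\<Sum>a\<in>A. \<Sum>b\<in>A. w a b)"
  have H: "?c * (\<Sum>g\<in>lists_of A s. sum_list (map (\<lambda>y. w x y + w y x) g)) = real s * ?c ^ s * (\<Sum>y\<in>A. w x y + w y x)" for x
    by (rule sum_lists_sum[OF assms])
  have HW: "(\<Sum>x\<in>A. \<Sum>y\<in>A. w x y + w y x) = 2 * ?W"
    by (simp add: sum.distrib sum.swap[of "\<lambda>x y. w y x"])
  have "(\<Sum>g\<in>lists_of A (Suc s). Phi w g)
     = (\<Sum>x\<in>A. \<Sum>g\<in>lists_of A s. sum_list (map (\<lambda>y. w x y + w y x) g) + Phi w g)"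
    by (simp add: sum_lists_Suc[OF assms])
  also have "\<dots> = (\<Sum>x\<in>A. \<Sum>g\<in>lists_of A s. sum_list (map (\<lambda>y. w x y + w y x) g)) + ?c * (\<Sum>g\<in>lists_of A s. Phi w g)"
    by (simp add: sum.distrib)
  finally have e: "(\<Sum>g\<in>lists_of A (Suc s). Phi w g) = \<dots>" .
  have "?c ^ 2 * (\<Sum>x\<in>A. \<Sum>g\<in>lists_of A s. sum_list (map (\<lambda>y. w x y + w y x) g))
       = ?c * (\<Sum>x\<in>A. ?c * (\<Sum>g\<in>lists_of A s. sum_list (map (\<lambda>y. w x y + w y x) g)))"
    by (simp add: sum_distrib_left power2_eq_square mult.assoc)
  also have "\<dots> = ?c * (\<Sum>x\<in>A. real s * ?c ^ s * (\<Sum>y\<in>A. w x y + w y x))"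
    by (simp only: H)
  also have "\<dots> = ?c * (real s * ?c ^ s * (2 * ?W))"
    by (simp only: sum_distrib_left[symmetric] HW)
  finally have e2: "?c ^ 2 * (\<Sum>x\<in>A. \<Sum>g\<in>lists_of A s. sum_list (map (\<lambda>y. w x y + w y x) g)) = \<dots>" .
  have "?c ^ 2 * (\<Sum>g\<in>lists_of A (Suc s). Phi w g)
     = ?c * (real s * ?c ^ s * (2 * ?W)) + ?c * (?c ^ 2 * (\<Sum>g\<in>lists_of A s. Phi w g))"
    unfolding e using e2 by (simp add: algebra_simps)
  also have "\<dots> = ?c * (real s * ?c ^ s * (2 * ?W)) + ?c * (real s * (real s - 1) * ?c ^ s * ?W)"
    by (simp only: Suc)
  also have "\<dots> = real (Suc s) * (real (Suc s) - 1) * ?c ^ Suc s * ?W"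
    by (simp add: algebra_simps)
  finally show ?case .
qed

lemma pair_le_Phi:
  "(\<forall>a b. 0 \<le> w a b) \<Longrightarrow> a \<in> set g \<Longrightarrow> b \<in> set g \<Longrightarrow> a \<noteq> b \<Longrightarrow> w a b \<le> Phi w g"
proof (induction g)
  case Nil
  then show ?case by simp
next
  case (Cons x g)
  have nn: "0 \<le> Phi w g" using Phi_nonneg Cons.prems by blast
  have nn2: "0 \<le> sum_list (map (\<lambda>y. w x y + w y x) g)"
    using Cons.prems by (auto intro!: sum_list_nonneg add_nonneg_nonneg)
  consider "a = x" "b \<in> set g" | "b = x" "a \<in> set g" | "a \<in> set g" "b \<in> set g"
    using Cons.prems by auto
  then show ?case
  proof cases
    case 1
    have "w x b + w b x \<le> sum_list (map (\<lambda>y. w x y + w y x) g)"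
      using 1 Cons.prems by (intro member_le_sum_list) (auto intro!: add_nonneg_nonneg)
    moreover have "0 \<le> w b x" using Cons.prems by simp
    ultimately show ?thesis using 1 nn by simp
  next
    case 2
    have "w x a + w a x \<le> sum_list (map (\<lambda>y. w x y + w y x) g)"
      using 2 Cons.prems by (intro member_le_sum_list) (auto intro!: add_nonneg_nonneg)
    moreover have "0 \<le> w x a" using Cons.prems by simp
    ultimately show ?thesis using 2 nn by simp
  next
    case 3
    then show ?thesis using Cons nn2 by simp
  qed
qed

lemma nondistinct_Phi:
  "(\<forall>a b. 0 \<le> w a b) \<Longrightarrow> (\<forall>a. 1 \<le> w a a) \<Longrightarrow> \<not> distinct g \<Longrightarrow> 1 \<le> Phi w g"
proof (induction g)
  case Nil
  then show ?case by simp
next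
  case (Cons x g)
  have nn: "0 \<le> Phi w g" using Phi_nonneg Cons.prems by blast
  have nn2: "0 \<le> sum_list (map (\<lambda>y. w x y + w y x) g)"
    using Cons.prems by (auto intro!: sum_list_nonneg add_nonneg_nonneg)
  show ?case
  proof (cases "x \<in> set g")
    case True
    have mem: "(\<lambda>y. w x y + w y x) x \<in> set (map (\<lambda>y. w x y + w y x) g)"
      using True by (simp only: set_map) (rule imageI)
    have "(\<lambda>y. w x y + w y x) x \<le> sum_list (map (\<lambda>y. w x y + w y x) g)"
      using mem Cons.prems by (intro member_le_sum_list) (auto intro!: add_nonneg_nonneg)
    moreover have "1 \<le> w x x" using Cons.prems by simp
    ultimately show ?thesis using nn by simp
  next
    case False
    then have "\<not> distinct g" using Cons.prems by simp
    then show ?thesis using Cons nn2 by simp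
  qed
qed

lemma dlt_Phi:
  assumes "2 \<le> length g"
  shows "(1/4::real) ^ dlt T g \<le> Phi (\<lambda>a b. (1/4) ^ tdist T a b) g"
proof (cases "distinct g")
  case True
  let ?M = "{tdist T a b | a b. a \<in> set g \<and> b \<in> set g \<and> a \<noteq> b}"
  have "g ! 0 \<noteq> g ! 1" using True assms by (subst nth_eq_iff_index_eq) auto
  moreover have "g ! 0 \<in> set g" "g ! 1 \<in> set g" using assms by (auto intro!: nth_mem)
  ultimately have ne: "?M \<noteq> {}" by blast
  have "Min ?M \<in> ?M" using Min_in[OF dlt_set_finite ne] .
  then obtain a b where ab: "a \<in> set g" "b \<in> set g" "a \<noteq> b" "Min ?M = tdist T a b" by blast
  have "dlt T g = tdist T a b" using ab True assms unfolding dlt_def by simp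
  then show ?thesis using pair_le_Phi[where w="\<lambda>a b. (1/4::real) ^ tdist T a b" and a=a and g=g and b=b] ab by simp
next
  case False
  then have "dlt T g = 0" unfolding dlt_def by simp
  then show ?thesis using nondistinct_Phi[where w="\<lambda>a b. (1/4::real) ^ tdist T a b" and g=g] False
    by (simp add: tdist_self)
qed

lemma ET_bound:
  assumes "bst_on n T" "2 \<le> s"
  shows "real n ^ 2 * (\<Sum>g\<in>lists_of {1..n} s. (1/4::real) ^ dlt T g) \<le> real s ^ 2 * real n ^ s * (real n * (5/2))"
proof -
  let ?w = "\<lambda>a b. (1/4::real) ^ tdist T a b"
  have "(\<Sum>g\<in>lists_of {1..n} s. (1/4::real) ^ dlt T g) \<le> (\<Sum>g\<in>lists_of {1..n} s. Phi ?w g)"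
    by (rule sum_mono) (use assms(2) dlt_Phi in \<open>auto simp: lists_of_def\<close>)
  then have "real n ^ 2 * (\<Sum>g\<in>lists_of {1..n} s. (1/4::real) ^ dlt T g) \<le> real n ^ 2 * (\<Sum>g\<in>lists_of {1..n} s. Phi ?w g)"
    by (simp add: mult_left_mono)
  also have "\<dots> = real s * (real s - 1) * real n ^ s * (\<Sum>a\<in>{1..n}. \<Sum>b\<in>{1..n}. ?w a b)"
    using sum_lists_Phi[where A="{1..n}" and s=s and w="?w"] by simp
  also have "\<dots> \<le> real s ^ 2 * real n ^ s * (real n * (5/2))"
  proof -
    have W: "(\<Sum>a\<in>{1..n}. \<Sum>b\<in>{1..n}. ?w a b) \<le> real n * (5/2)" using W_bound[OF assms(1)] .
    have W0: "0 \<le> (\<Sum>a\<in>{1..n}. \<Sum>b\<in>{1..n}. ?w a b)" by (intro sum_nonneg) auto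
    have "real s * (real s - 1) \<le> real s ^ 2" by (simp add: power2_eq_square algebra_simps)
    moreover have "0 \<le> real s * (real s - 1)" using assms(2) by simp
    ultimately show ?thesis using W W0
      by (intro mult_mono) auto
  qed
  finally show ?thesis .
qed



lemma avg_exists:
  fixes f :: "'a \<Rightarrow> real"
  assumes "finite A" "A \<noteq> {}"
  shows "\<exists>a\<in>A. f a \<le> sum f A / real (card A)"
proof (rule ccontr)
  assume "\<not> ?thesis"
  then have "\<forall>a\<in>A. sum f A / real (card A) < f a" by auto
  then have "(\<Sum>a\<in>A. sum f A / real (card A)) < sum f A"
    using sum_strict_mono[OF assms, of "\<lambda>_. sum f A / real (card A)" f] by auto
  moreover have "(\<Sum>a\<in>A. sum f A / real (card A)) = sum f A"
    using assms by simp
  ultimately show False by simp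
qed

lemma prod_pow_dlt:
  "prod_list (map (\<lambda>g. (1/4::real) ^ dlt T g) G) = (1/4) ^ (sum_list (map (dlt T) G))"
  by (induction G) (auto simp: power_add)

lemma exists_good_G:
  assumes "1 \<le> n" "2 \<le> s"
  shows "\<exists>G\<in>lists_of (lists_of {1..n} s) P. \<forall>T. bst_on n T \<longrightarrow>
     (1/4::real) ^ (sum_list (map (dlt T) G)) \<le> real n ^ n * (5/2 * real s ^ 2 / real n) ^ P"
proof -
  let ?TS = "{T. bst_on n T}"
  let ?LS = "lists_of {1..n} s"
  let ?LG = "lists_of ?LS P"
  let ?B1 = "5/2 * real s ^ 2 * real n ^ s / real n"
  define F where "F G = (\<Sum>T\<in>?TS. (1/4::real) ^ (sum_list (map (dlt T) G)))" for G
  have finTS: "finite ?TS" and cardTS: "card ?TS \<le> n ^ n" using trees_finite_card by auto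
  have finLS: "finite ?LS" by (rule lists_of_finite) simp
  have finLG: "finite ?LG" by (rule lists_of_finite[OF finLS])
  have cardLG: "card ?LG = (n ^ s) ^ P" using lists_of_card[OF finLS] lists_of_card[of "{1..n}" s] by simp
  have ET: "(\<Sum>g\<in>?LS. (1/4::real) ^ dlt T g) \<le> ?B1" if T: "bst_on n T" for T
  proof -
    have "real n ^ 2 * (\<Sum>g\<in>?LS. (1/4::real) ^ dlt T g) \<le> real s ^ 2 * real n ^ s * (real n * (5/2))"
      by (rule ET_bound[OF T assms(2)])
    moreover have "real n > 0" using assms by simp
    ultimately show ?thesis by (simp add: field_simps power2_eq_square)
  qed
  have "(\<Sum>G\<in>?LG. F G) = (\<Sum>T\<in>?TS. \<Sum>G\<in>?LG. prod_list (map (\<lambda>g. (1/4::real) ^ dlt T g) G))"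
    unfolding F_def prod_pow_dlt by (rule sum.swap)
  also have "\<dots> = (\<Sum>T\<in>?TS. (\<Sum>g\<in>?LS. (1/4::real) ^ dlt T g) ^ P)"
    by (intro sum.cong refl) (rule sum_lists_prod[OF finLS])
  also have "\<dots> \<le> (\<Sum>T\<in>?TS. ?B1 ^ P)"
  proof (intro sum_mono power_mono)
    fix T assume "T \<in> ?TS"
    then show "(\<Sum>g\<in>?LS. (1/4::real) ^ dlt T g) \<le> ?B1" using ET by simp
  qed (auto intro!: sum_nonneg)
  also have "\<dots> = real (card ?TS) * ?B1 ^ P" by simp
  also have "\<dots> \<le> real n ^ n * ?B1 ^ P"
    using cardTS by (intro mult_right_mono) (auto simp flip: of_nat_power)
  finally have sumF: "(\<Sum>G\<in>?LG. F G) \<le> real n ^ n * ?B1 ^ P" .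
  have "?LG \<noteq> {}" using cardLG assms by (metis card.empty nat_power_eq_Suc_0_iff power_not_zero
        bot_nat_0.not_eq_extremum le_zero_eq not_one_le_zero)
  then obtain G where G: "G \<in> ?LG" "F G \<le> (\<Sum>G\<in>?LG. F G) / real (card ?LG)"
    using avg_exists[OF finLG] by blast
  have cpos: "real (card ?LG) > 0" using cardLG assms by simp
  have "F G \<le> real n ^ n * ?B1 ^ P / real (card ?LG)"
    using G(2) sumF cpos by (meson divide_right_mono less_eq_real_def order_trans)
  also have "\<dots> = real n ^ n * (?B1 ^ P / (real n ^ s) ^ P)"
    using cardLG by simp
  also have "\<dots> = real n ^ n * (?B1 / real n ^ s) ^ P"
    by (simp only: power_divide)
  also have "?B1 / real n ^ s = 5/2 * real s ^ 2 / real n"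
    using assms by (simp add: field_simps)
  finally have FG: "F G \<le> real n ^ n * (5/2 * real s ^ 2 / real n) ^ P" .
  show ?thesis
  proof (intro bexI[OF _ G(1)] allI impI)
    fix T assume T: "bst_on n T"
    have "(1/4::real) ^ (sum_list (map (dlt T) G)) \<le> F G"
      unfolding F_def using T finTS by (intro member_le_sum) auto
    then show "(1/4::real) ^ (sum_list (map (dlt T) G)) \<le> real n ^ n * (5/2 * real s ^ 2 / real n) ^ P"
      using FG by simp
  qed
qed



lemma concat_uniform_length:
  "(\<forall>x\<in>set R. length x = s) \<Longrightarrow> length (concat R) = length R * s"
  by (induction R) auto

lemma div_pred_eq:
  fixes q r :: nat
  assumes "q mod r \<noteq> 0"
  shows "(q - 1) div r = q div r"
proof (cases "r = 0")
  case True
  then show ?thesis by simp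
next
  case False
  have a: "q div r * r + q mod r = q" by (rule div_mult_mod_eq)
  have b: "q mod r < r" using False by simp
  have a': "r * (q div r) + q mod r = q" using a by (simp add: mult.commute)
  have c: "0 < q mod r" using assms by simp
  show ?thesis
    apply (rule div_nat_eqI)
    using a' b c apply linarith
    unfolding mult_Suc_right using a' b c by linarith
qed

lemma rho_le_n:
  assumes "set xs \<subseteq> {1..n}" "t \<le> length xs"
  shows "rho xs t a \<le> n"
proof -
  have "{xs ! (u - 1) |u. last_acc xs t a < u \<and> u < t} \<subseteq> {1..n}"
  proof
    fix y assume "y \<in> {xs ! (u - 1) |u. last_acc xs t a < u \<and> u < t}"
    then obtain u where u: "y = xs ! (u - 1)" "last_acc xs t a < u" "u < t" by auto
    then have "u - 1 < length xs" using assms by simp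
    then have "y \<in> set xs" using u by simp
    then show "y \<in> {1..n}" using assms by auto
  qed
  then show ?thesis unfolding rho_def using card_mono[of "{1..n}"] by fastforce
qed

lemma rho_rep:
  assumes "1 \<le> d" "d < t" "xs ! (t - 1 - d) = xs ! (t - 1)"
  shows "rho xs t (xs ! (t - 1)) \<le> d - 1"
proof -
  let ?a = "xs ! (t - 1)"
  let ?A = "{s. 1 \<le> s \<and> s < t \<and> xs ! (s - 1) = ?a}"
  have fin: "finite ({0} \<union> ?A)" by (rule finite_subset[of _ "{..t}"]) auto
  have "t - d \<in> ?A" using assms by (auto simp: diff_diff_add add.commute)
  then have la: "t - d \<le> last_acc xs t ?a"
    unfolding last_acc_def using fin by (intro Max_ge) auto
  have "{xs ! (u - 1) |u. last_acc xs t ?a < u \<and> u < t} \<subseteq> (\<lambda>u. xs ! (u - 1)) ` {t - d<..<t}"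
    using la by auto
  then have "rho xs t ?a \<le> card ((\<lambda>u. xs ! (u - 1)) ` {t - d<..<t})"
    unfolding rho_def by (intro card_mono) auto
  also have "\<dots> \<le> card {t - d<..<t}" by (rule card_image_le) simp
  also have "\<dots> = d - 1" using assms by simp
  finally show ?thesis .
qed

lemma lg_mono: "x \<le> y \<Longrightarrow> lg x \<le> lg y"
  unfolding lg_def by (subst log_le_cancel_iff) auto

lemma lg_ge1: "1 \<le> lg x"
proof -
  have "log 2 2 \<le> log 2 (max 2 x)" by (subst log_le_cancel_iff) auto
  then show ?thesis unfolding lg_def by simp
qed

lemma lg_2k: assumes "1 \<le> k" shows "lg (2 * real k) \<le> 2 * lg (real k)"
proof -
  have "lg (2 * real k) = log 2 (2 * real k)" using assms unfolding lg_def by (simp add: max_def)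
  also have "\<dots> = 1 + log 2 (real k)" using assms by (simp add: log_mult)
  also have "log 2 (real k) \<le> lg (real k)" unfolding lg_def using assms by (subst log_le_cancel_iff) auto
  finally show ?thesis using lg_ge1[of "real k"] by simp
qed

lemma lg_nat: "2 \<le> n \<Longrightarrow> lg (real n) = log 2 (real n)"
  unfolding lg_def by (simp add: max_def)

locale seqc =
  fixes n k r P :: nat and G :: "nat list list"
  assumes n2: "2 \<le> n" and k1: "1 \<le> k" and r1: "1 \<le> r" and rlog: "log 2 (real n) \<le> real r"
    and G: "G \<in> lists_of (lists_of {1..n} (2*k)) P"
begin

definition S where "S = concat (rounds G r)"

lemma lenG: "length G = P" using G by (simp add: lists_of_def)

lemma G_elems: "g \<in> set G \<Longrightarrow> length g = 2*k \<and> set g \<subseteq> {1..n}"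
  using G by (auto simp: lists_of_def)

lemma len_rounds: "length (rounds G r) = P * r"
  by (simp add: rounds_def lenG)

lemma rounds_elems: "\<rho> \<in> set (rounds G r) \<Longrightarrow> \<rho> \<in> set G"
proof -
  assume "\<rho> \<in> set (rounds G r)"
  then obtain j where j: "j < length G * r" "\<rho> = G ! (j div r)" unfolding rounds_def by auto
  then have "0 < r" by (cases r) auto
  then have "j div r < length G" using j by (simp add: div_less_iff_less_mult)
  then show ?thesis using j by simp
qed

lemma rounds_len2: "\<forall>\<rho>\<in>set (rounds G r). length \<rho> = 2*k"
  using rounds_elems G_elems by blast

lemma lenS: "length S = P * r * (2*k)"
  unfolding S_def using concat_uniform_length[OF rounds_len2] len_rounds by simp

lemma setS: "set S \<subseteq> {1..n}"
  unfolding S_def using rounds_elems G_elems by auto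

lemma nthS: "i < P * r * (2*k) \<Longrightarrow> S ! i = G ! (i div (2*k) div r) ! (i mod (2*k))"
proof -
  assume i: "i < P * r * (2*k)"
  have "S ! i = rounds G r ! (i div (2*k)) ! (i mod (2*k))"
    unfolding S_def using nth_concat_uniform[OF rounds_len2, of i] i len_rounds by simp
  moreover have "i div (2*k) < P * r" using i k1
    by (simp add: div_less_iff_less_mult mult.assoc)
  ultimately show ?thesis by (simp add: rounds_def lenG)
qed

lemma S_rep:
  assumes i: "i < P * r * (2*k)" and q: "(i div (2*k)) mod r \<noteq> 0"
  shows "2*k \<le> i \<and> S ! (i - 2*k) = S ! i"
proof -
  let ?s = "2*k"
  have s0: "0 < ?s" using k1 by simp
  have si: "?s \<le> i"
  proof (rule ccontr)
    assume "\<not> ?s \<le> i"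
    then have "i div ?s = 0" by simp
    then show False using q by simp
  qed
  have d1: "i div ?s = Suc ((i - ?s) div ?s)" using si s0 by (intro le_div_geq) auto
  have m1: "i mod ?s = (i - ?s) mod ?s" using si by (rule le_mod_geq)
  have "(i - ?s) div ?s div r = i div ?s div r"
    using div_pred_eq[OF q] d1 by simp
  then have "S ! (i - ?s) = S ! i" using nthS[of i] nthS[of "i - ?s"] i m1 by simp
  then show ?thesis using si by simp
qed

lemma WS_bound: "WS S \<le> 3 * real (P * r * (2*k)) * lg (real k)"
proof -
  let ?m = "P * r * (2*k)"
  let ?s = "2*k"
  define h where "h q = (if q mod r = 0 then lg (real n) else 0)" for q
  have "WS S = (\<Sum>t = 1..?m. lg (real (rho S t (S ! (t - 1)))))"
    unfolding WS_def lenS by simp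
  also have "\<dots> = (\<Sum>i<?m. lg (real (rho S (Suc i) (S ! i))))"
    using sum.atLeast1_atMost_eq[of "\<lambda>t. lg (real (rho S t (S ! (t - 1))))" ?m] by simp
  also have "\<dots> \<le> (\<Sum>i<?m. 2 * lg (real k) + h (i div ?s))"
  proof (rule sum_mono)
    fix i assume i: "i \<in> {..<?m}"
    show "lg (real (rho S (Suc i) (S ! i))) \<le> 2 * lg (real k) + h (i div ?s)"
    proof (cases "(i div ?s) mod r = 0")
      case True
      have "rho S (Suc i) (S ! i) \<le> n" using rho_le_n[OF setS, of "Suc i"] i lenS by simp
      then have "lg (real (rho S (Suc i) (S ! i))) \<le> lg (real n)" by (intro lg_mono) simp
      then show ?thesis using True lg_ge1[of "real k"] unfolding h_def by simp
    next
      case False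
      then have rep: "?s \<le> i" "S ! (i - ?s) = S ! i" using S_rep[of i] i by auto
      have "rho S (Suc i) (S ! (Suc i - 1)) \<le> ?s - 1"
        by (rule rho_rep) (use rep k1 in auto)
      then have "real (rho S (Suc i) (S ! i)) \<le> 2 * real k" by simp
      then have "lg (real (rho S (Suc i) (S ! i))) \<le> lg (2 * real k)" by (rule lg_mono)
      also have "\<dots> \<le> 2 * lg (real k)" by (rule lg_2k[OF k1])
      finally show ?thesis using False unfolding h_def by simp
    qed
  qed
  also have "\<dots> = real ?m * (2 * lg (real k)) + (\<Sum>i<?m. h (i div ?s))"
    by (simp add: sum.distrib)
  also have "(\<Sum>i<?m. h (i div ?s)) = real ?s * (\<Sum>q<P*r. h q)"
    using sum_div_group[of ?s h "P*r"] k1 by simp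
  also have "(\<Sum>q<P*r. h q) = real P * (\<Sum>j<r. if j = 0 then lg (real n) else 0)"
    using sum_mod_group[where h="\<lambda>j. if j = 0 then lg (real n) else 0" and P=P and r=r] unfolding h_def by simp
  also have "(\<Sum>j<r. if j = 0 then lg (real n) else (0::real)) = lg (real n)"
    using r1 by (simp add: sum.delta)
  finally have ws: "WS S \<le> real ?m * (2 * lg (real k)) + real ?s * (real P * lg (real n))" .
  have "real ?s * (real P * lg (real n)) \<le> real ?s * (real P * real r)"
    using rlog lg_nat[OF n2] by (intro mult_left_mono) auto
  also have "\<dots> = real ?m" by simp
  also have "\<dots> \<le> real ?m * lg (real k)" using lg_ge1[of "real k"]
    by (metis mult.right_neutral mult_left_mono of_nat_0_le_iff)
  finally show ?thesis using ws by simp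
qed

lemma Fk_lower:
  "\<exists>T. bst_on n T \<and> real (Fk n k S) \<ge> real (length S) + real (k * r) * real (sum_list (map (dlt T) G))"
proof -
  let ?TS = "{FkT n k T S | T. bst_on n T}"
  have "?TS \<noteq> {}" using exists_bst by blast
  then have "Fk n k S \<in> ?TS" unfolding Fk_def by (rule Inf_nat_def1)
  then obtain T where T: "bst_on n T" "Fk n k S = FkT n k T S" by auto
  let ?FS = "{finger_cost T l S fs | l fs. (\<forall>i < k. l i \<in> {1..n}) \<and> length fs = length S \<and> set fs \<subseteq> {..<k}}"
  have "finger_cost T (\<lambda>_. 1) S (replicate (length S) 0) \<in> ?FS" using n2 k1 by fastforce
  then have "?FS \<noteq> {}" by blast
  then have "FkT n k T S \<in> ?FS" unfolding FkT_def by (rule Inf_nat_def1)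
  then obtain l fs where lf: "FkT n k T S = finger_cost T l S fs" "length fs = length S" "set fs \<subseteq> {..<k}"
    by auto
  have "(\<Sum>\<rho>\<leftarrow>rounds G r. 2*k + k * dlt T \<rho>) \<le> finger_cost T l (concat (rounds G r)) fs"
    by (rule rounds_cost[OF rounds_len2]) (use lf in \<open>auto simp: S_def\<close>)
  moreover have "(\<Sum>\<rho>\<leftarrow>rounds G r. 2*k + k * dlt T \<rho>) = length G * r * (2*k) + k * r * sum_list (map (dlt T) G)"
    using rounds_sum r1 by simp
  ultimately have "length S + k * r * sum_list (map (dlt T) G) \<le> Fk n k S"
    using T lf lenS lenG by (simp add: S_def)
  then have "real (length S + k * r * sum_list (map (dlt T) G)) \<le> real (Fk n k S)" by (simp only: of_nat_le_iff)
  then show ?thesis using T by auto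
qed

end



lemma key_bound:
  fixes \<epsilon> C0 K0 :: real and n k X :: nat
  assumes eps: "\<epsilon> > 0" and C0: "C0 > 0" and n2: "n \<ge> 2" and ne: "real n \<ge> 2 / \<epsilon>"
    and K0: "K0 = log 2 10 + 2 * log 2 C0"
    and nK: "log 2 (real n) \<ge> \<bar>K0\<bar> / \<epsilon>" and k1: "k \<ge> 1"
    and kC: "real k \<le> C0 * real n powr (1/2 - \<epsilon>)"
    and X: "(1/4::real) ^ X \<le> real n ^ n * (5/2 * real (2*k) ^ 2 / real n) ^ (n^2)"
  shows "real (n^2) * \<epsilon> * log 2 (real n) / 4 \<le> real X"
proof -
  define L where "L = log 2 (real n)"
  define B where "B = real n ^ n * (5/2 * real (2*k) ^ 2 / real n) ^ (n^2)"
  have npos: "real n > 0" using n2 by simp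
  have kpos: "real k > 0" using k1 by simp
  have L1: "L \<ge> 1" unfolding L_def using n2 by simp
  have q: "5/2 * real (2*k) ^ 2 / real n = 10 * real k ^ 2 / real n" by (simp add: power2_eq_square)
  have qpos: "10 * real k ^ 2 / real n > 0" using npos kpos by simp
  have Bpos: "B > 0" unfolding B_def q using npos qpos by simp
  have lB: "log 2 B = real n * L + real (n^2) * log 2 (10 * real k ^ 2 / real n)"
    unfolding B_def q L_def using npos qpos k1 by (simp add: log_mult log_nat_power)
  have lq: "log 2 (10 * real k ^ 2 / real n) = log 2 10 + 2 * log 2 (real k) - L"
    unfolding L_def using npos kpos by (simp add: log_divide log_mult log_nat_power)
  have hk: "log 2 (real k) \<le> log 2 C0 + (1/2 - \<epsilon>) * L"
  proof -
    have "log 2 (real k) \<le> log 2 (C0 * real n powr (1/2 - \<epsilon>))"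
      using kC kpos by (subst log_le_cancel_iff) auto
    also have "\<dots> = log 2 C0 + (1/2 - \<epsilon>) * L"
      unfolding L_def using C0 npos by (simp add: log_mult log_powr)
    finally show ?thesis .
  qed
  have lq2: "log 2 (10 * real k ^ 2 / real n) \<le> K0 - 2 * \<epsilon> * L"
    using lq hk K0 by (simp add: algebra_simps)
  have K0L: "K0 \<le> \<epsilon> * L"
  proof -
    have "\<bar>K0\<bar> / \<epsilon> \<le> L" using nK unfolding L_def .
    then have "\<bar>K0\<bar> \<le> \<epsilon> * L" using eps by (simp add: field_simps)
    then show ?thesis by simp
  qed
  have lq3: "log 2 (10 * real k ^ 2 / real n) \<le> - \<epsilon> * L" using lq2 K0L by simp
  have "real (n^2) * log 2 (10 * real k ^ 2 / real n) \<le> real (n^2) * (- \<epsilon> * L)"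
    using lq3 by (intro mult_left_mono) auto
  then have lB2: "log 2 B \<le> real n * L - real (n^2) * \<epsilon> * L" using lB by simp
  have nL: "real n * L \<le> real (n^2) * \<epsilon> * L / 2"
  proof -
    have "2 \<le> real n * \<epsilon>" using ne eps by (simp add: field_simps)
    then have "real n * L * 2 \<le> real n * L * (real n * \<epsilon>)"
      using npos L1 by (intro mult_left_mono) auto
    then show ?thesis by (simp add: power2_eq_square algebra_simps)
  qed
  have lB3: "log 2 B \<le> - (real (n^2) * \<epsilon> * L / 2)" using lB2 nL by simp
  have "log 2 ((1/4::real) ^ X) \<le> log 2 B"
    using X Bpos unfolding B_def[symmetric] by (subst log_le_cancel_iff) auto
  moreover have "log 2 ((1/4::real) ^ X) = - 2 * real X"
  proof -
    have l4: "log 2 (4::real) = 2" using log_pow_cancel[of "2::real" 2] by simp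
    show ?thesis by (simp add: log_nat_power log_divide l4)
  qed
  ultimately have "- 2 * real X \<le> - (real (n^2) * \<epsilon> * L / 2)" using lB3 by simp
  then show ?thesis unfolding L_def by simp
qed



theorem theorem32:
  fixes \<epsilon> C0 :: real
  assumes "\<epsilon> > 0" and "C0 > 0"
  shows "\<exists>c1 c2 :: real. c1 > 0 \<and> c2 > 0 \<and>
    (\<exists>N :: nat. \<forall>n \<ge> N. \<forall>k :: nat.
       1 \<le> k \<and> real k \<le> C0 * real n powr (1/2 - \<epsilon>) \<longrightarrow>
       (\<exists>m :: nat. \<exists>S :: nat list. m \<ge> 1 \<and> length S = m \<and> set S \<subseteq> {1..n} \<and>
          WS S \<le> c1 * real m * lg (real k) \<and>
          real (Fk n k S) \<ge> c2 * real m * lg (real n / real k)))"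
proof -
  have eps: "\<epsilon> > 0" and C0: "C0 > 0" using assms by auto
  define K0 where "K0 = log 2 10 + 2 * log 2 C0"
  define N where "N = nat \<lceil>max (2/\<epsilon>) (2 powr (\<bar>K0\<bar>/\<epsilon>))\<rceil> + 2"
  have main: "\<exists>m :: nat. \<exists>S :: nat list. m \<ge> 1 \<and> length S = m \<and> set S \<subseteq> {1..n} \<and>
          WS S \<le> 3 * real m * lg (real k) \<and>
          real (Fk n k S) \<ge> \<epsilon>/8 * real m * lg (real n / real k)"
    if nN: "n \<ge> N" and k1: "1 \<le> k" and kC: "real k \<le> C0 * real n powr (1/2 - \<epsilon>)" for n k
  proof -
    have n2: "n \<ge> 2" using nN unfolding N_def by simp
    have nmax: "real n \<ge> max (2/\<epsilon>) (2 powr (\<bar>K0\<bar>/\<epsilon>))"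
    proof -
      have "max (2/\<epsilon>) (2 powr (\<bar>K0\<bar>/\<epsilon>)) \<le> real (nat \<lceil>max (2/\<epsilon>) (2 powr (\<bar>K0\<bar>/\<epsilon>))\<rceil>)"
        by (rule real_nat_ceiling_ge)
      also have "\<dots> \<le> real n"
      proof -
        have "nat \<lceil>max (2/\<epsilon>) (2 powr (\<bar>K0\<bar>/\<epsilon>))\<rceil> \<le> n" using nN unfolding N_def by linarith
        then show ?thesis by (simp only: of_nat_le_iff)
      qed
      finally show ?thesis .
    qed
    have ne: "real n \<ge> 2 / \<epsilon>" using nmax by simp
    have nK: "log 2 (real n) \<ge> \<bar>K0\<bar> / \<epsilon>"
    proof -
      have "2 powr (\<bar>K0\<bar>/\<epsilon>) \<le> real n" using nmax by simp
      then have "log 2 (2 powr (\<bar>K0\<bar>/\<epsilon>)) \<le> log 2 (real n)"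
        using n2 by (subst log_le_cancel_iff) auto
      then show ?thesis by simp
    qed
    define L where "L = log 2 (real n)"
    have L1: "L \<ge> 1" unfolding L_def using n2 by simp
    define r where "r = nat \<lceil>L\<rceil>"
    define P where "P = n^2"
    have rlog: "L \<le> real r" unfolding r_def by (rule real_nat_ceiling_ge)
    have r1: "1 \<le> r" using rlog L1 by linarith
    have P1: "1 \<le> P" unfolding P_def using n2 by simp
    obtain G where G: "G \<in> lists_of (lists_of {1..n} (2*k)) P"
      and GT: "\<forall>T. bst_on n T \<longrightarrow>
     (1/4::real) ^ (sum_list (map (dlt T) G)) \<le> real n ^ n * (5/2 * real (2*k) ^ 2 / real n) ^ P"
      using exists_good_G[of n "2*k" P] n2 k1 by auto
    interpret sq: seqc n k r P G
      by unfold_locales (use n2 k1 r1 rlog G in \<open>auto simp: L_def\<close>)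
    define m where "m = P * r * (2*k)"
    have m1: "m \<ge> 1" unfolding m_def using P1 r1 k1 by simp
    obtain T where T: "bst_on n T"
      and FT: "real (Fk n k sq.S) \<ge> real (length sq.S) + real (k * r) * real (sum_list (map (dlt T) G))"
      using sq.Fk_lower by blast
    define X where "X = sum_list (map (dlt T) G)"
    have XB: "(1/4::real) ^ X \<le> real n ^ n * (5/2 * real (2*k) ^ 2 / real n) ^ (n^2)"
      using GT T unfolding X_def P_def by simp
    have KX: "real (n^2) * \<epsilon> * L / 4 \<le> real X"
      unfolding L_def
      by (rule key_bound[OF eps C0 n2 ne K0_def nK k1 kC XB])
    have lgnk: "lg (real n / real k) \<le> L"
    proof -
      have "real n / real k \<le> real n" using k1 n2 by (simp add: divide_le_eq)
      then have "max 2 (real n / real k) \<le> real n" using n2 by simp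
      then have "log 2 (max 2 (real n / real k)) \<le> log 2 (real n)"
        by (subst log_le_cancel_iff) auto
      then show ?thesis unfolding lg_def L_def .
    qed
    have m0: "0 \<le> \<epsilon>/8 * real m" using eps by simp
    have "\<epsilon>/8 * real m * lg (real n / real k) \<le> \<epsilon>/8 * real m * L"
      using lgnk m0 by (rule mult_left_mono)
    also have "\<epsilon>/8 * real m * L = real (k * r) * (real (n^2) * \<epsilon> * L / 4)"
      unfolding m_def P_def by (simp add: algebra_simps)
    also have "\<dots> \<le> real (k * r) * real X"
      using KX by (intro mult_left_mono) auto
    also have "\<dots> \<le> real (Fk n k sq.S)" using FT unfolding X_def by simp
    finally have Fb: "\<epsilon>/8 * real m * lg (real n / real k) \<le> real (Fk n k sq.S)" .
    show ?thesis
      apply (rule exI[of _ m], rule exI[of _ sq.S])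
      using m1 sq.lenS sq.setS sq.WS_bound Fb unfolding m_def by simp
  qed
  show ?thesis
    apply (rule exI[of _ 3], rule exI[of _ "\<epsilon>/8"])
    apply (intro conjI)
      apply simp
    using eps apply simp
    apply (rule exI[of _ N])
    using main by blast
qed


end
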